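(* Let $n\ge2$, $K\geq1$, ${\mathcal{A}}\in\{0,1\}^{2K\times2K}$, and assume the reproducing kernel Hilbert space $\mathcal{H}$ defining $\|\cdot\|_{\mathcal{V}}$ is continuously embedded into $C_0^1(\mathbb{R}^d\times S^{d-1})$. Let $(c_m,\rho_m)_{m\in\mathbb{N}}$ be a sequence of weighted shape graphs with $c_m=(c_m^1,\dots,c_m^K)\in\operatorname{Graph}^n({\mathcal{A}})$ and $\rho_m=(\rho_m^1,\dots,\rho_m^K)$, $\rho_m^k\in BV([0,1],\mathbb{R}_+)$, such that for every $m$ and $k$, $c^k_m$ is a $C^1$ immersion, and $c^k_m$ converges uniformly, together with its derivative, to a $C^1$ immersion $c^k:[0,1]\to\mathbb{R}^d$. Assume also that for each $k$, $\rho^k_m$ converges in $L^1([0,1])$ to some $\rho^k\in BV([0,1],\mathbb{R}_+)$. Then, with $c=(c^1,\dots,c^K)$ and $\rho=(\rho^1,\dots,\rho^K)$, $\|\mu_{c_m,\rho_m}-\mu_{c,\rho}\|_{\mathcal{V}}\to0$ as $m\to\infty$.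
   Context: $\operatorname{Imm}^n([0,1],\mathbb{R}^d)$ is the set of $c\in H^n([0,1],\mathbb{R}^d)$ with $\partial_\theta c\neq0$ everywhere; $\operatorname{Graph}^n({\mathcal{A}})$ is the set of $c=(c^1,\dots,c^K)\in\prod_k\operatorname{Imm}^n([0,1],\mathbb{R}^d)$ with $c^k(0)=c^l(0)$ whenever ${\mathcal{A}}_{2k-1,2l-1}=1$, $c^k(1)=c^l(1)$ whenever ${\mathcal{A}}_{2k,2l}=1$, $c^k(0)=c^l(1)$ whenever ${\mathcal{A}}_{2k-1,2l}=1$. $BV([0,1],\mathbb{R}_+)$ is the space of nonnegative functions of bounded variation on $[0,1]$. Let $\mathcal{K}$ be a positive definite kernel on $\mathbb{R}^d\times S^{d-1}$ with RKHS $\mathcal{H}$; $C_0^1(\mathbb{R}^d\times S^{d-1})$ is the space of $C^1$ functions vanishing at infinity with their first derivatives, normed by $\|\omega\|_\infty+\|d\omega\|_\infty$. For a finite signed Radon measure $\mu$ on $\mathbb{R}^d\times S^{d-1}$, $\|\mu\|_{\mathcal{V}}=\sup_{\omega\in\mathcal{H},\|\omega\|_{\mathcal{H}}\le1}\int\omega\,d\mu$. For $c=(c^1,\dots,c^K)$ with $C^1$ immersion components and integrable weights $\rho=(\rho^1,\dots,\rho^K)$, $\mu_{c,\rho}$ is the measure with $\int\omega\,d\mu_{c,\rho}=\sum_{k=1}^K\int_0^1\rho^k(\theta)\,\omega\big(c^k(\theta),\partial_\theta c^k(\theta)/|\partial_\theta c^k(\theta)|\big)|\partial_\theta c^k(\theta)|\,d\theta$.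 *)

theory Defs
  imports "HOL-Analysis.Analysis"
begin

definition test_fun :: "(real \<Rightarrow> real) \<Rightarrow> bool" where
  "test_fun \<phi> \<longleftrightarrow> (\<forall>j x. (deriv ^^ j) \<phi> differentiable (at x))
     \<and> closure {x. \<phi> x \<noteq> 0} \<subseteq> {0<..<1}"

definition L2_on01 :: "(real \<Rightarrow> 'a::euclidean_space) \<Rightarrow> bool" where
  "L2_on01 f \<longleftrightarrow> set_borel_measurable lborel {0..1} f
     \<and> set_integrable lborel {0..1} (\<lambda>t. (norm (f t))^2)"

definition sobolev :: "nat \<Rightarrow> (real \<Rightarrow> 'a::euclidean_space) \<Rightarrow> bool" where
  "sobolev n f \<longleftrightarrow> (\<exists>g :: nat \<Rightarrow> real \<Rightarrow> 'a. g 0 = f \<and> (\<forall>j\<le>n. L2_on01 (g j))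
     \<and> (\<forall>j\<in>{1..n}. \<forall>\<phi>. test_fun \<phi> \<longrightarrow>
         (LINT t:{0..1}|lborel. ((deriv ^^ j) \<phi> t) *\<^sub>R f t)
           = ((-1)^j) *\<^sub>R (LINT t:{0..1}|lborel. \<phi> t *\<^sub>R g j t)))"

abbreviation dtheta :: "(real \<Rightarrow> 'a::real_normed_vector) \<Rightarrow> real \<Rightarrow> 'a" where
  "dtheta c t \<equiv> vector_derivative c (at t within {0..1})"

definition imm :: "nat \<Rightarrow> (real \<Rightarrow> 'a::euclidean_space) \<Rightarrow> bool" where
  "imm n c \<longleftrightarrow> sobolev n c \<and>
     (\<forall>t\<in>{0..1}. c differentiable (at t within {0..1}) \<and> dtheta c t \<noteq> 0)"

definition C1_immersion :: "(real \<Rightarrow> 'a::euclidean_space) \<Rightarrow> bool" where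
  "C1_immersion c \<longleftrightarrow> (\<forall>t\<in>{0..1}. c differentiable (at t within {0..1}) \<and> dtheta c t \<noteq> 0)
     \<and> continuous_on {0..1} (dtheta c)"

definition graph_n :: "nat \<Rightarrow> nat \<Rightarrow> (nat \<Rightarrow> nat \<Rightarrow> nat) \<Rightarrow> (nat \<Rightarrow> real \<Rightarrow> 'a::euclidean_space) \<Rightarrow> bool" where
  "graph_n n K A c \<longleftrightarrow> (\<forall>k\<in>{1..K}. imm n (c k)) \<and>
     (\<forall>k\<in>{1..K}. \<forall>l\<in>{1..K}.
        (A (2*k-1) (2*l-1) = 1 \<longrightarrow> c k 0 = c l 0) \<and>
        (A (2*k) (2*l) = 1 \<longrightarrow> c k 1 = c l 1) \<and>
        (A (2*k-1) (2*l) = 1 \<longrightarrow> c k 0 = c l 1))"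

definition BV_nonneg :: "(real \<Rightarrow> real) \<Rightarrow> bool" where
  "BV_nonneg f \<longleftrightarrow> (\<forall>t\<in>{0..1}. f t \<ge> 0) \<and>
     (\<exists>B. \<forall>ts::real list. sorted ts \<and> set ts \<subseteq> {0..1} \<longrightarrow>
        (\<Sum>i<length ts - 1. \<bar>f (ts ! Suc i) - f (ts ! i)\<bar>) \<le> B)"

definition Xsp :: "('a::euclidean_space \<times> 'a) set" where
  "Xsp = UNIV \<times> sphere 0 1"

definition pos_def_kernel :: "('a::euclidean_space \<times> 'a \<Rightarrow> 'a \<times> 'a \<Rightarrow> real) \<Rightarrow> bool" where
  "pos_def_kernel Kr \<longleftrightarrow> (\<forall>p\<in>Xsp. \<forall>q\<in>Xsp. Kr p q = Kr q p) \<and>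
     (\<forall>N (x :: nat \<Rightarrow> 'a \<times> 'a) (a :: nat \<Rightarrow> real). (\<forall>i<N. x i \<in> Xsp) \<longrightarrow>
        (\<Sum>i<N. \<Sum>j<N. a i * a j * Kr (x i) (x j)) \<ge> 0)"

text \<open>Hs with inner product ip is the RKHS of Kr: functions on Xsp (extended by 0 outside),
  a real Hilbert space containing the kernel sections, with the reproducing property.\<close>
definition kernel_section :: "('a::euclidean_space \<times> 'a \<Rightarrow> 'a \<times> 'a \<Rightarrow> real) \<Rightarrow> 'a \<times> 'a \<Rightarrow> ('a \<times> 'a \<Rightarrow> real)" where
  "kernel_section Kr p = (\<lambda>q. if q \<in> Xsp then Kr q p else 0)"

definition is_rkhs :: "('a::euclidean_space \<times> 'a \<Rightarrow> 'a \<times> 'a \<Rightarrow> real)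
    \<Rightarrow> ('a \<times> 'a \<Rightarrow> real) set \<Rightarrow> (('a \<times> 'a \<Rightarrow> real) \<Rightarrow> ('a \<times> 'a \<Rightarrow> real) \<Rightarrow> real) \<Rightarrow> bool" where
  "is_rkhs Kr Hs ip \<longleftrightarrow>
     (\<forall>f\<in>Hs. \<forall>q. q \<notin> Xsp \<longrightarrow> f q = 0) \<and>
     (\<lambda>_. 0) \<in> Hs \<and> (\<forall>f\<in>Hs. \<forall>g\<in>Hs. (\<lambda>q. f q + g q) \<in> Hs) \<and>
     (\<forall>f\<in>Hs. \<forall>r. (\<lambda>q. r * f q) \<in> Hs) \<and>
     (\<forall>f\<in>Hs. \<forall>g\<in>Hs. ip f g = ip g f) \<and>
     (\<forall>f\<in>Hs. \<forall>g\<in>Hs. \<forall>h\<in>Hs. \<forall>r s. ip (\<lambda>q. r * f q + s * g q) h = r * ip f h + s * ip g h) \<and>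
     (\<forall>f\<in>Hs. ip f f \<ge> 0 \<and> (ip f f = 0 \<longrightarrow> f = (\<lambda>_. 0))) \<and>
     (\<forall>u. (\<forall>m. u m \<in> Hs) \<longrightarrow>
        (\<forall>e>0. \<exists>N. \<forall>m\<ge>N. \<forall>m'\<ge>N. sqrt (ip (\<lambda>q. u m q - u m' q) (\<lambda>q. u m q - u m' q)) < e) \<longrightarrow>
        (\<exists>f\<in>Hs. (\<lambda>m. sqrt (ip (\<lambda>q. u m q - f q) (\<lambda>q. u m q - f q))) \<longlonglongrightarrow> 0)) \<and>
     (\<forall>p\<in>Xsp. kernel_section Kr p \<in> Hs) \<and>
     (\<forall>f\<in>Hs. \<forall>p\<in>Xsp. ip f (kernel_section Kr p) = f p)"

definition hnorm :: "(('a \<times> 'a \<Rightarrow> real) \<Rightarrow> ('a \<times> 'a \<Rightarrow> real) \<Rightarrow> real) \<Rightarrow> ('a \<times> 'a \<Rightarrow> real) \<Rightarrow> real" where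
  "hnorm ip f = sqrt (ip f f)"

text \<open>A function on R^d x S^{d-1} is handled through its 0-homogeneous extension in the
  second variable to the open set R^d x (R^d - {0}); the operator norm of the differential of
  this extension at (x,u), u in S^{d-1}, equals the norm of the differential of w on the
  tangent space R^d x u^perp.\<close>
definition hom_ext :: "('a::euclidean_space \<times> 'a \<Rightarrow> real) \<Rightarrow> 'a \<times> 'a \<Rightarrow> real" where
  "hom_ext w = (\<lambda>(x, v). w (x, (1 / norm v) *\<^sub>R v))"

definition Dw :: "('a::euclidean_space \<times> 'a \<Rightarrow> real) \<Rightarrow> 'a \<times> 'a \<Rightarrow> ('a \<times> 'a) \<Rightarrow>\<^sub>L real" where
  "Dw w p = Blinfun (frechet_derivative (hom_ext w) (at p))"

definition C01 :: "('a::euclidean_space \<times> 'a \<Rightarrow> real) \<Rightarrow> bool" where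
  "C01 w \<longleftrightarrow>
     (\<forall>p\<in>UNIV \<times> (UNIV - {0}). hom_ext w differentiable (at p)) \<and>
     continuous_on (UNIV \<times> (UNIV - {0})) (Dw w) \<and>
     (\<forall>e>0. \<exists>R. \<forall>x u. (x, u) \<in> Xsp \<and> norm x \<ge> R \<longrightarrow>
         \<bar>w (x, u)\<bar> \<le> e \<and> norm (Dw w (x, u)) \<le> e)"

definition C01_norm :: "('a::euclidean_space \<times> 'a \<Rightarrow> real) \<Rightarrow> real" where
  "C01_norm w = (SUP p\<in>Xsp. \<bar>w p\<bar>) + (SUP p\<in>Xsp. norm (Dw w p))"

definition cont_embedded_C01 :: "('a::euclidean_space \<times> 'a \<Rightarrow> real) set
    \<Rightarrow> (('a \<times> 'a \<Rightarrow> real) \<Rightarrow> ('a \<times> 'a \<Rightarrow> real) \<Rightarrow> real) \<Rightarrow> bool" where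
  "cont_embedded_C01 Hs ip \<longleftrightarrow> (\<exists>C. \<forall>w\<in>Hs. C01 w \<and> C01_norm w \<le> C * hnorm ip w)"

text \<open>Action of mu_{c,rho} on a test function w.\<close>
definition mu_int :: "nat \<Rightarrow> (nat \<Rightarrow> real \<Rightarrow> 'a::euclidean_space) \<Rightarrow> (nat \<Rightarrow> real \<Rightarrow> real)
    \<Rightarrow> ('a \<times> 'a \<Rightarrow> real) \<Rightarrow> real" where
  "mu_int K c \<rho> w = (\<Sum>k\<in>{1..K}. LINT t:{0..1}|lborel.
      \<rho> k t * w (c k t, (1 / norm (dtheta (c k) t)) *\<^sub>R dtheta (c k) t) * norm (dtheta (c k) t))"

definition V_dist :: "('a \<times> 'a \<Rightarrow> real) set \<Rightarrow> (('a \<times> 'a \<Rightarrow> real) \<Rightarrow> ('a \<times> 'a \<Rightarrow> real) \<Rightarrow> real)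
    \<Rightarrow> (('a \<times> 'a \<Rightarrow> real) \<Rightarrow> real) \<Rightarrow> (('a \<times> 'a \<Rightarrow> real) \<Rightarrow> real) \<Rightarrow> real" where
  "V_dist Hs ip I1 I2 = Sup {I1 w - I2 w | w. w \<in> Hs \<and> hnorm ip w \<le> 1}"

end

theory Submission
  imports Defs
begin

definition varsum :: "(real \<Rightarrow> real) \<Rightarrow> real list \<Rightarrow> real" where
  "varsum f ts = (\<Sum>i<length ts - 1. \<bar>f (ts ! Suc i) - f (ts ! i)\<bar>)"

lemma varsum_snoc:
  assumes "ts \<noteq> []"
  shows "varsum f (ts @ [a]) = varsum f ts + \<bar>f a - f (last ts)\<bar>"
proof -
  obtain n where n: "length ts = Suc n" using assms by (cases ts) auto
  have "varsum f (ts @ [a]) = (\<Sum>i<Suc n. \<bar>f ((ts@[a]) ! Suc i) - f ((ts@[a]) ! i)\<bar>)"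
    unfolding varsum_def using n by simp
  also have "\<dots> = (\<Sum>i<n. \<bar>f ((ts@[a]) ! Suc i) - f ((ts@[a]) ! i)\<bar>) + \<bar>f a - f (last ts)\<bar>"
    using n assms by (simp add: nth_append last_conv_nth)
  also have "(\<Sum>i<n. \<bar>f ((ts@[a]) ! Suc i) - f ((ts@[a]) ! i)\<bar>) = varsum f ts"
    unfolding varsum_def using n by (intro sum.cong) (auto simp: nth_append)
  finally show ?thesis .
qed

lemma varsum_nonneg: "varsum f ts \<ge> 0"
  unfolding varsum_def by (intro sum_nonneg) auto

lemma varsum_single: "varsum f [a] = 0"
  unfolding varsum_def by simp

lemma varsum_two: "varsum f (ts @ [s, t]) \<ge> varsum f ts + \<bar>f t - f s\<bar>"
proof (cases "ts = []")
  case True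
  then show ?thesis using varsum_snoc[of "[s]" f t] by (simp add: varsum_single varsum_def)
next
  case False
  have "varsum f (ts @ [s, t]) = varsum f ((ts @ [s]) @ [t])" by simp
  also have "\<dots> = varsum f ts + \<bar>f s - f (last ts)\<bar> + \<bar>f t - f s\<bar>"
    using varsum_snoc[of "ts @ [s]" f t] varsum_snoc[OF False, of f s] by simp
  finally show ?thesis by simp
qed

definition Vf :: "(real \<Rightarrow> real) \<Rightarrow> real \<Rightarrow> real" where
  "Vf f t = Sup (varsum f ` {ts. sorted ts \<and> set ts \<subseteq> {0..t}})"

lemma BV_measurable_bounded:
  assumes "BV_nonneg f"
  shows "set_borel_measurable lborel {0..1} f" and "\<exists>M. \<forall>t\<in>{0..1}. \<bar>f t\<bar> \<le> M"
proof -
  obtain Bd where Bd: "\<And>ts. sorted ts \<Longrightarrow> set ts \<subseteq> {0..1} \<Longrightarrow> varsum f ts \<le> Bd"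
    using assms unfolding BV_nonneg_def varsum_def by blast
  define S where "S t = varsum f ` {ts. sorted ts \<and> set ts \<subseteq> {0..t}}" for t
  have VS: "Vf f t = Sup (S t)" for t unfolding Vf_def S_def ..
  have ne: "S t \<noteq> {}" for t unfolding S_def by (auto intro: exI[of _ "[]"])
  have bdd: "bdd_above (S t)" if "t \<le> 1" for t
    unfolding S_def using that by (intro bdd_aboveI[of _ Bd]) (auto intro!: Bd)
  have monoV: "Vf f s \<le> Vf f t" if "s \<le> t" "t \<le> 1" for s t
    unfolding VS by (rule cSup_subset_mono[OF ne bdd[OF that(2)]]) (use that in \<open>force simp: S_def\<close>)
  have key: "Vf f s + (f t - f s) \<le> Vf f t" if "0 \<le> s" "s \<le> t" "t \<le> 1" for s t
  proof -
    have "Vf f s \<le> Vf f t - (f t - f s)"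
      unfolding VS[of s]
    proof (rule cSup_least[OF ne])
      fix x assume "x \<in> S s"
      then obtain ts where ts: "sorted ts" "set ts \<subseteq> {0..s}" and x: "x = varsum f ts"
        unfolding S_def by auto
      have "sorted (ts @ [s, t])" using ts that by (auto simp: sorted_append)
      moreover have "set (ts @ [s, t]) \<subseteq> {0..t}" using ts that by auto
      ultimately have "varsum f (ts @ [s, t]) \<in> S t" unfolding S_def by blast
      hence "varsum f (ts @ [s, t]) \<le> Vf f t" unfolding VS using bdd[OF that(3)] by (rule cSup_upper)
      thus "x \<le> Vf f t - (f t - f s)" using varsum_two[where f=f and ts=ts and s=s and t=t] x by linarith
    qed
    thus ?thesis by linarith
  qed
  define cl where "cl t = max 0 (min 1 t)" for t :: real
  have cl: "0 \<le> cl t" "cl t \<le> 1" "s \<le> t \<Longrightarrow> cl s \<le> cl t" for s t unfolding cl_def by auto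
  define g1 where "g1 t = Vf f (cl t)" for t
  define g2 where "g2 t = Vf f (cl t) - f (cl t)" for t
  have "mono g1" unfolding g1_def by (intro monoI monoV) (auto intro: cl)
  hence m1: "g1 \<in> borel_measurable borel" by (rule borel_measurable_mono)
  have "mono g2" unfolding g2_def
  proof (intro monoI)
    fix s t :: real assume "s \<le> t"
    show "Vf f (cl s) - f (cl s) \<le> Vf f (cl t) - f (cl t)"
      using key[of "cl s" "cl t"] cl[of s] cl[of t] cl(3)[OF \<open>s \<le> t\<close>] by linarith
  qed
  hence m2: "g2 \<in> borel_measurable borel" by (rule borel_measurable_mono)
  have eq: "indicator {0..1} x *\<^sub>R f x = indicator {0..1} x *\<^sub>R (g1 x - g2 x)" for x
    by (cases "x \<in> {0..1}") (auto simp: g1_def g2_def cl_def)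
  show "set_borel_measurable lborel {0..1} f"
    unfolding set_borel_measurable_def eq using m1 m2 by measurable
  have "\<bar>f t\<bar> \<le> \<bar>f 0\<bar> + Bd" if "t \<in> {0..1}" for t
  proof -
    have "varsum f [0, t] \<le> Bd" using that by (intro Bd) auto
    moreover have "varsum f [0, t] = \<bar>f t - f 0\<bar>" using varsum_two[where f=f and ts="[]" and s=0 and t=t]
      unfolding varsum_def by simp
    ultimately show ?thesis by linarith
  qed
  thus "\<exists>M. \<forall>t\<in>{0..1}. \<bar>f t\<bar> \<le> M" by blast
qed


lemma hom_ext_Xsp: "p \<in> Xsp \<Longrightarrow> hom_ext w p = w p"
  by (cases p) (auto simp: hom_ext_def Xsp_def)

lemma hom_ext_scale:
  fixes w :: "'a::euclidean_space \<times> 'a \<Rightarrow> real"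
  assumes "r > 0"
  shows "hom_ext w (a, (1/r) *\<^sub>R b) = hom_ext w (a, b)"
proof (cases "b = 0")
  case True then show ?thesis by (simp add: hom_ext_def)
next
  case False
  have "(1 / norm ((1/r) *\<^sub>R b)) *\<^sub>R ((1/r) *\<^sub>R b) = (1 / norm b) *\<^sub>R b"
    using assms False by (simp add: field_simps)
  then show ?thesis unfolding hom_ext_def by (simp only: case_prod_conv)
qed

lemma Dw_deriv:
  fixes w :: "'a::euclidean_space \<times> 'a \<Rightarrow> real"
  assumes "C01 w" "snd q \<noteq> 0"
  shows "(hom_ext w has_derivative blinfun_apply (Dw w q)) (at q)"
proof -
  have "hom_ext w differentiable (at q)" using assms unfolding C01_def
    by (cases q) auto
  hence d: "(hom_ext w has_derivative frechet_derivative (hom_ext w) (at q)) (at q)"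
    using frechet_derivative_works by blast
  hence "bounded_linear (frechet_derivative (hom_ext w) (at q))"
    using has_derivative_bounded_linear by blast
  thus ?thesis using d unfolding Dw_def by (simp add: bounded_linear_Blinfun_apply)
qed

lemma C01_cont: 
  fixes w :: "'a::euclidean_space \<times> 'a \<Rightarrow> real"
  assumes "C01 w"
  shows "continuous_on (UNIV \<times> (UNIV - {0})) (hom_ext w)"
proof (rule continuous_at_imp_continuous_on, intro ballI)
  fix p :: "'a \<times> 'a" assume "p \<in> UNIV \<times> (UNIV - {0})"
  hence "hom_ext w differentiable (at p)" using assms unfolding C01_def by blast
  thus "isCont (hom_ext w) p" by (rule differentiable_imp_continuous_within)
qed

lemma C01_cont_Xsp:
  fixes w :: "'a::euclidean_space \<times> 'a \<Rightarrow> real"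
  assumes "C01 w"
  shows "continuous_on Xsp w"
proof -
  have "continuous_on Xsp (hom_ext w)"
    by (rule continuous_on_subset[OF C01_cont[OF assms]]) (auto simp: Xsp_def)
  thus ?thesis by (rule continuous_on_cong[THEN iffD1, rotated 2]) (auto simp: hom_ext_Xsp)
qed

lemma C01_bdd:
  fixes w :: "'a::euclidean_space \<times> 'a \<Rightarrow> real"
  assumes "C01 w"
  shows "bdd_above ((\<lambda>p. \<bar>w p\<bar>) ` Xsp)" "bdd_above ((\<lambda>p. norm (Dw w p)) ` Xsp)"
proof -
  obtain R where R: "\<And>x u. (x, u) \<in> Xsp \<Longrightarrow> norm x \<ge> R \<Longrightarrow> \<bar>w (x, u)\<bar> \<le> 1 \<and> norm (Dw w (x, u)) \<le> 1"
    using assms unfolding C01_def by (meson zero_less_one)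
  define Kc where "Kc = cball (0::'a) R \<times> sphere (0::'a) 1"
  have cK: "compact Kc" unfolding Kc_def by (intro compact_Times) auto
  have sub: "Kc \<subseteq> UNIV \<times> (UNIV - {0})" unfolding Kc_def by auto
  have "compact (hom_ext w ` Kc)"
    by (rule compact_continuous_image[OF continuous_on_subset[OF C01_cont[OF assms] sub] cK])
  then obtain b1 where b1: "\<And>p. p \<in> Kc \<Longrightarrow> norm (hom_ext w p) \<le> b1"
    using compact_imp_bounded bounded_iff by (metis image_eqI)
  have "continuous_on (UNIV \<times> (UNIV - {0})) (Dw w)" using assms unfolding C01_def by blast
  hence "compact (Dw w ` Kc)"
    by (rule compact_continuous_image[OF continuous_on_subset[OF _ sub] cK])
  then obtain b2 where b2: "\<And>p. p \<in> Kc \<Longrightarrow> norm (Dw w p) \<le> b2"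
    using compact_imp_bounded bounded_iff by (metis image_eqI)
  have KX: "Kc \<subseteq> Xsp" unfolding Kc_def Xsp_def by auto
  show "bdd_above ((\<lambda>p. \<bar>w p\<bar>) ` Xsp)"
  proof (rule bdd_aboveI2)
    fix p :: "'a \<times> 'a" assume p: "p \<in> Xsp"
    obtain x u where xu: "p = (x, u)" by (cases p)
    show "\<bar>w p\<bar> \<le> max b1 1"
    proof (cases "norm x \<ge> R")
      case True thus ?thesis using R p xu by fastforce
    next
      case False
      hence "p \<in> Kc" using p xu unfolding Kc_def Xsp_def by auto
      thus ?thesis using b1[of p] hom_ext_Xsp[of p w] KX by auto
    qed
  qed
  show "bdd_above ((\<lambda>p. norm (Dw w p)) ` Xsp)"
  proof (rule bdd_aboveI2)
    fix p :: "'a \<times> 'a" assume p: "p \<in> Xsp"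
    obtain x u where xu: "p = (x, u)" by (cases p)
    show "norm (Dw w p) \<le> max b2 1"
    proof (cases "norm x \<ge> R")
      case True thus ?thesis using R p xu by fastforce
    next
      case False
      hence "p \<in> Kc" using p xu unfolding Kc_def Xsp_def by auto
      thus ?thesis using b2[of p] by auto
    qed
  qed
qed

lemma C01_bounds:
  fixes w :: "'a::euclidean_space \<times> 'a \<Rightarrow> real"
  assumes "C01 w" "C01_norm w \<le> B" "p \<in> Xsp"
  shows "\<bar>w p\<bar> \<le> B" "norm (Dw w p) \<le> B"
proof -
  have a: "\<bar>w p\<bar> \<le> (SUP p\<in>Xsp. \<bar>w p\<bar>)" by (rule cSUP_upper[OF assms(3) C01_bdd(1)[OF assms(1)]])
  have b: "norm (Dw w p) \<le> (SUP p\<in>Xsp. norm (Dw w p))" by (rule cSUP_upper[OF assms(3) C01_bdd(2)[OF assms(1)]])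
  have "0 \<le> \<bar>w p\<bar>" "0 \<le> norm (Dw w p)" by auto
  thus "\<bar>w p\<bar> \<le> B" "norm (Dw w p) \<le> B" using a b assms(2) unfolding C01_norm_def by linarith+
qed

lemma segment_snd_norm:
  fixes u1 u2 :: "'a::euclidean_space"
  assumes "norm u1 = 1" "norm u2 = 1" "norm (u1 - u2) \<le> 1" "p \<in> closed_segment (x1, u1) (x2, u2)"
  shows "norm (snd p) \<ge> 1/2"
proof -
  obtain t where t: "0 \<le> t" "t \<le> 1" "p = (1 - t) *\<^sub>R (x1, u1) + t *\<^sub>R (x2, u2)"
    using assms(4) unfolding closed_segment_def by auto
  have sp: "snd p = (1 - t) *\<^sub>R u1 + t *\<^sub>R u2" using t by simp
  show ?thesis
  proof (cases "t \<le> 1/2")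
    case True
    have e: "snd p = u1 - t *\<^sub>R (u1 - u2)" unfolding sp by (simp add: algebra_simps)
    have "t * norm (u1 - u2) \<le> 1/2 * 1" by (rule mult_mono) (use True t assms(3) in auto)
    hence "norm (t *\<^sub>R (u1 - u2)) \<le> 1/2" using t by simp
    hence "norm (snd p) \<ge> norm u1 - 1/2" unfolding e using norm_triangle_ineq2[of u1 "t *\<^sub>R (u1 - u2)"] by linarith
    thus ?thesis using assms by simp
  next
    case False
    have e: "snd p = u2 + (1 - t) *\<^sub>R (u1 - u2)" unfolding sp by (simp add: algebra_simps)
    have "(1 - t) * norm (u1 - u2) \<le> 1/2 * 1" by (rule mult_mono) (use False t assms(3) in auto)
    hence "norm ((1 - t) *\<^sub>R (u1 - u2)) \<le> 1/2" using t by simp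
    hence "norm (snd p) \<ge> norm u2 - 1/2" unfolding e using norm_diff_ineq[of u2 "(1 - t) *\<^sub>R (u1 - u2)"] by linarith
    thus ?thesis using assms by simp
  qed
qed

lemma C01_lip:
  fixes w :: "'a::euclidean_space \<times> 'a \<Rightarrow> real"
  assumes w: "C01 w" "C01_norm w \<le> B" and X: "(x1, u1) \<in> Xsp" "(x2, u2) \<in> Xsp"
    and u: "norm (u1 - u2) \<le> 1"
  shows "\<bar>w (x1, u1) - w (x2, u2)\<bar> \<le> 3 * B * (norm (x1 - x2) + norm (u1 - u2))"
proof -
  have B0: "0 \<le> B" using C01_bounds(1)[OF w X(1)] by linarith
  define S where "S = closed_segment (x1, u1) (x2, u2)"
  have n1: "norm u1 = 1" "norm u2 = 1" using X by (auto simp: Xsp_def)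
  have seg: "norm (snd p) \<ge> 1/2" if "p \<in> S" for p
    using segment_snd_norm[OF n1 u] that unfolding S_def by blast
  define q where "q p = (fst p, (1 / norm (snd p)) *\<^sub>R snd p)" for p :: "'a \<times> 'a"
  define L where "L p = (\<lambda>hk::'a \<times> 'a. (fst hk, (1 / norm (snd p)) *\<^sub>R snd hk))" for p :: "'a \<times> 'a"
  define f' where "f' p = (\<lambda>hk. blinfun_apply (Dw w (q p)) (L p hk))" for p
  have deriv: "(hom_ext w has_derivative f' p) (at p within S)" if pS: "p \<in> S" for p
  proof -
    define r where "r = norm (snd p)"
    have r: "r > 0" using seg[OF pS] unfolding r_def by linarith
    have eqf: "hom_ext w z = hom_ext w (fst z, (1 / r) *\<^sub>R snd z)" for z
      using hom_ext_scale[OF r, of w "fst z" "snd z"] by simp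
    have lin: "((\<lambda>z::'a\<times>'a. (fst z, (1 / r) *\<^sub>R snd z)) has_derivative L p) (at p within S)"
      unfolding L_def r_def[symmetric]
      by (auto intro!: derivative_eq_intros)
    have qn: "snd (q p) \<noteq> 0" using r unfolding q_def r_def by auto
    have d2: "(hom_ext w has_derivative blinfun_apply (Dw w (q p))) (at (fst p, (1 / r) *\<^sub>R snd p))"
      using Dw_deriv[OF w(1) qn] unfolding q_def r_def by simp
    have "((\<lambda>z. hom_ext w (fst z, (1 / r) *\<^sub>R snd z)) has_derivative (\<lambda>z. blinfun_apply (Dw w (q p)) (L p z))) (at p within S)"
      by (rule has_derivative_compose[OF lin d2])
    thus ?thesis unfolding f'_def using eqf by simp
  qed
  have onb: "onorm (f' p) \<le> 3 * B" if pS: "p \<in> S" for p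
  proof (rule onorm_le)
    fix hk :: "'a \<times> 'a"
    have r: "norm (snd p) \<ge> 1/2" using seg[OF pS] .
    have qX: "q p \<in> Xsp" using r unfolding q_def Xsp_def by auto
    have "norm (L p hk) \<le> norm (fst hk) + norm ((1 / norm (snd p)) *\<^sub>R snd hk)"
      unfolding L_def by (rule norm_Pair_le)
    also have "\<dots> \<le> norm hk + 2 * norm hk"
    proof -
      have "1 / norm (snd p) \<le> 2" using r by (simp add: divide_le_eq)
      have e: "norm ((1 / norm (snd p)) *\<^sub>R snd hk) = (1 / norm (snd p)) * norm (snd hk)"
        using r by simp
      have "norm ((1 / norm (snd p)) *\<^sub>R snd hk) \<le> 2 * norm (snd hk)"
        unfolding e by (rule mult_right_mono[OF \<open>1 / norm (snd p) \<le> 2\<close>]) simp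
      moreover have "norm (snd hk) \<le> norm hk" "norm (fst hk) \<le> norm hk"
        using norm_snd_le[of "snd hk" "fst hk"] norm_fst_le[of "fst hk" "snd hk"] by auto
      ultimately show ?thesis by linarith
    qed
    finally have Ln: "norm (L p hk) \<le> 3 * norm hk" by simp
    have "norm (f' p hk) \<le> norm (Dw w (q p)) * norm (L p hk)"
      unfolding f'_def by (rule norm_blinfun)
    also have "\<dots> \<le> B * (3 * norm hk)"
      by (rule mult_mono[OF C01_bounds(2)[OF w qX] Ln B0]) simp
    finally show "norm (f' p hk) \<le> 3 * B * norm hk" by simp
  qed
  have a: "norm (hom_ext w (x1, u1) - hom_ext w (x2, u2)) \<le> 3 * B * norm ((x1, u1) - (x2, u2))"
    by (rule differentiable_bound[OF _ deriv onb]) (auto simp: S_def)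
  have "norm ((x1, u1) - (x2, u2)) \<le> norm (x1 - x2) + norm (u1 - u2)"
    using norm_Pair_le[of "x1 - x2" "u1 - u2"] by simp
  hence b: "3 * B * norm ((x1, u1) - (x2, u2)) \<le> 3 * B * (norm (x1 - x2) + norm (u1 - u2))"
    using B0 by (intro mult_left_mono) auto
  show ?thesis using a b hom_ext_Xsp[OF X(1), of w] hom_ext_Xsp[OF X(2), of w] by simp
qed


lemma BV_cont_integrable:
  assumes "BV_nonneg r" "continuous_on {0..1} g"
  shows "set_integrable lborel {0..1} (\<lambda>t. r t * g t)"
proof -
  obtain M where M: "\<And>t. t \<in> {0..1} \<Longrightarrow> \<bar>r t\<bar> \<le> M" using BV_measurable_bounded(2)[OF assms(1)] by blast
  have "compact (g ` {0..1})" by (rule compact_continuous_image[OF assms(2)]) simp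
  then obtain G where G: "\<And>t. t \<in> {0..1} \<Longrightarrow> norm (g t) \<le> G"
    using compact_imp_bounded bounded_iff by (metis image_eqI)
  have mr: "(\<lambda>x. indicator {0..1} x *\<^sub>R r x) \<in> borel_measurable borel"
    using BV_measurable_bounded(1)[OF assms(1)] unfolding set_borel_measurable_def by simp
  have mg: "(\<lambda>x. indicator {0..1} x *\<^sub>R g x) \<in> borel_measurable borel"
    by (rule borel_measurable_continuous_on_indicator[OF _ assms(2)]) simp
  have eq: "indicator {0..1} x *\<^sub>R (r x * g x) = (indicator {0..1} x *\<^sub>R r x) * (indicator {0..1} x *\<^sub>R g x)" for x :: real
    by (auto split: split_indicator)
  have meas: "set_borel_measurable lborel {0..1} (\<lambda>t. r t * g t)"
    unfolding set_borel_measurable_def eq using mr mg by simp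
  have ci: "set_integrable lborel {0..1::real} (\<lambda>_. M * G)"
    by (rule borel_integrable_atLeastAtMost') simp
  show ?thesis
  proof (rule set_integrable_bound[OF ci meas], rule AE_I2, intro impI)
    fix t :: real assume t: "t \<in> {0..1}"
    have "\<bar>r t\<bar> * \<bar>g t\<bar> \<le> M * G" using M[OF t] G[OF t] by (intro mult_mono) auto
    moreover have "0 \<le> \<bar>r t\<bar> * \<bar>g t\<bar>" by simp
    moreover have "M * G \<le> \<bar>M\<bar> * \<bar>G\<bar>" by (metis abs_ge_self abs_mult)
    ultimately show "norm (r t * g t) \<le> norm (M * G)" by (simp add: abs_mult)
  qed
qed

lemma C1_cont:
  assumes "C1_immersion c"
  shows "continuous_on {0..1} c" "continuous_on {0..1} (dtheta c)"
    "continuous_on {0..1} (\<lambda>t. (1 / norm (dtheta c t)) *\<^sub>R dtheta c t)"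
proof -
  show "continuous_on {0..1} c" unfolding continuous_on_eq_continuous_within
    using assms differentiable_imp_continuous_within unfolding C1_immersion_def by blast
  show d: "continuous_on {0..1} (dtheta c)" using assms unfolding C1_immersion_def by blast
  have nz: "\<And>t. t \<in> {0..1} \<Longrightarrow> norm (dtheta c t) \<noteq> 0" using assms unfolding C1_immersion_def by auto
  show "continuous_on {0..1} (\<lambda>t. (1 / norm (dtheta c t)) *\<^sub>R dtheta c t)"
    using nz by (auto intro!: continuous_intros d)
qed

lemma F_cont:
  fixes w :: "'a::euclidean_space \<times> 'a \<Rightarrow> real"
  assumes "C1_immersion c" "continuous_on Xsp w"
  shows "continuous_on {0..1} (\<lambda>t. w (c t, (1 / norm (dtheta c t)) *\<^sub>R dtheta c t) * norm (dtheta c t))"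
proof -
  have nz: "\<And>t. t \<in> {0..1} \<Longrightarrow> norm (dtheta c t) \<noteq> 0" using assms unfolding C1_immersion_def by auto
  have "continuous_on {0..1} (\<lambda>t. w (c t, (1 / norm (dtheta c t)) *\<^sub>R dtheta c t))"
  proof (rule continuous_on_compose2[OF assms(2)])
    show "continuous_on {0..1} (\<lambda>t. (c t, (1 / norm (dtheta c t)) *\<^sub>R dtheta c t))"
      by (intro continuous_on_Pair C1_cont[OF assms(1)])
    show "(\<lambda>t. (c t, (1 / norm (dtheta c t)) *\<^sub>R dtheta c t)) ` {0..1} \<subseteq> Xsp"
      using nz by (auto simp: Xsp_def)
  qed
  thus ?thesis using C1_cont(2)[OF assms(1)] by (intro continuous_intros)
qed

lemma unit_diff:
  fixes u v :: "'a::real_normed_vector"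
  assumes "u \<noteq> 0" "v \<noteq> 0"
  shows "norm ((1 / norm u) *\<^sub>R u - (1 / norm v) *\<^sub>R v) \<le> 2 * norm (u - v) / norm v"
proof -
  have e0: "(1 / norm u) *\<^sub>R u - (1 / norm v) *\<^sub>R v
     = (1 / norm v) *\<^sub>R (u - v) + (1 / norm u - 1 / norm v) *\<^sub>R u"
    by (simp add: algebra_simps)
  have "1 / norm u - 1 / norm v = (norm v - norm u) / (norm u * norm v)"
    using assms by (simp add: field_simps)
  hence e: "(1 / norm u) *\<^sub>R u - (1 / norm v) *\<^sub>R v
     = (1 / norm v) *\<^sub>R (u - v) + ((norm v - norm u) / (norm u * norm v)) *\<^sub>R u"
    using e0 by simp
  have "norm (((norm v - norm u) / (norm u * norm v)) *\<^sub>R u) = \<bar>norm v - norm u\<bar> / norm v"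
    using assms by (simp add: abs_mult field_simps)
  also have "\<dots> \<le> norm (u - v) / norm v"
    using assms by (intro divide_right_mono) (auto simp: norm_minus_commute intro: order_trans[OF norm_triangle_ineq3])
  finally have a: "norm (((norm v - norm u) / (norm u * norm v)) *\<^sub>R u) \<le> norm (u - v) / norm v" .
  have b: "norm ((1 / norm v) *\<^sub>R (u - v)) = norm (u - v) / norm v" by simp
  show ?thesis unfolding e using norm_triangle_ineq[of "(1 / norm v) *\<^sub>R (u - v)" "((norm v - norm u) / (norm u * norm v)) *\<^sub>R u"] a b
    by linarith
qed


lemma conv_k:
  fixes cm :: "nat \<Rightarrow> real \<Rightarrow> 'a::euclidean_space" and c :: "real \<Rightarrow> 'a"
    and \<rho>m :: "nat \<Rightarrow> real \<Rightarrow> real" and \<rho> :: "real \<Rightarrow> real"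
    and W :: "('a \<times> 'a \<Rightarrow> real) set" and B \<epsilon> :: real
  assumes cm1: "\<forall>m. C1_immersion (cm m)" and c1: "C1_immersion c"
    and uc: "uniform_limit {0..1} cm c sequentially"
    and ud: "uniform_limit {0..1} (\<lambda>m. dtheta (cm m)) (dtheta c) sequentially"
    and bvm: "\<forall>m. BV_nonneg (\<rho>m m)" and bv: "BV_nonneg \<rho>"
    and l1: "(\<lambda>m. LINT t:{0..1}|lborel. \<bar>\<rho>m m t - \<rho> t\<bar>) \<longlonglongrightarrow> 0"
    and W: "\<forall>w\<in>W. C01 w \<and> C01_norm w \<le> B" and B0: "0 \<le> B" and e: "\<epsilon> > 0"
  shows "eventually (\<lambda>m. \<forall>w\<in>W. \<bar>(LINT t:{0..1}|lborel. \<rho>m m t * w (cm m t, (1 / norm (dtheta (cm m) t)) *\<^sub>R dtheta (cm m) t) * norm (dtheta (cm m) t))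
     - (LINT t:{0..1}|lborel. \<rho> t * w (c t, (1 / norm (dtheta c t)) *\<^sub>R dtheta c t) * norm (dtheta c t))\<bar> \<le> \<epsilon>) sequentially"
proof -
  define D where "D = dtheta c"
  define Dm where "Dm m = dtheta (cm m)" for m
  have Dnz: "D t \<noteq> 0" if "t \<in> {0..1}" for t using c1 that unfolding C1_immersion_def D_def by auto
  have Dmnz: "Dm m t \<noteq> 0" if "t \<in> {0..1}" for m t using cm1 that unfolding C1_immersion_def Dm_def by auto
  have cD: "continuous_on {0..1} (\<lambda>t. norm (D t))"
    using C1_cont(2)[OF c1] unfolding D_def by (intro continuous_intros)
  obtain t0 where t0: "t0 \<in> {0..1}" "\<And>t. t \<in> {0..1} \<Longrightarrow> norm (D t0) \<le> norm (D t)"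
    using continuous_attains_inf[OF compact_Icc _ cD] by auto
  define a where "a = norm (D t0)"
  have a: "a > 0" "\<And>t. t \<in> {0..1} \<Longrightarrow> a \<le> norm (D t)" using t0 Dnz unfolding a_def by auto
  obtain t1 where t1: "t1 \<in> {0..1}" "\<And>t. t \<in> {0..1} \<Longrightarrow> norm (D t) \<le> norm (D t1)"
    using continuous_attains_sup[OF compact_Icc _ cD] by auto
  define Mc where "Mc = norm (D t1)"
  have Mc: "Mc \<ge> 0" "\<And>t. t \<in> {0..1} \<Longrightarrow> norm (D t) \<le> Mc" using t1 unfolding Mc_def by auto
  define R0 where "R0 = \<bar>LINT t:{0..1}|lborel. \<rho> t\<bar>"
  have R0: "R0 \<ge> 0" unfolding R0_def by simp
  define L where "L = 3 * B"
  define Q where "Q = L * (1 + 2 / a) * (Mc + 1) + B"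
  have Q: "Q \<ge> 0" unfolding Q_def L_def using B0 a Mc by (intro add_nonneg_nonneg mult_nonneg_nonneg) auto
  define \<eta> where "\<eta> = min (min 1 (a / 2)) (\<epsilon> / (2 * (R0 + 1) * (Q + 1)))"
  have \<eta>12: "\<eta> \<le> min 1 (a / 2)" "\<eta> \<le> \<epsilon> / (2 * (R0 + 1) * (Q + 1))"
    unfolding \<eta>_def by (rule min.cobounded1, rule min.cobounded2)
  have \<eta>: "\<eta> > 0" "\<eta> \<le> 1" "\<eta> \<le> a / 2" "\<eta> \<le> \<epsilon> / (2 * (R0 + 1) * (Q + 1))"
  proof -
    show "\<eta> > 0" unfolding \<eta>_def using a e R0 Q by auto
    show "\<eta> \<le> 1" "\<eta> \<le> a / 2" using \<eta>12(1) min.bounded_iff by blast+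
    show "\<eta> \<le> \<epsilon> / (2 * (R0 + 1) * (Q + 1))" by (rule \<eta>12(2))
  qed
  have \<eta>Q: "\<eta> * Q * R0 \<le> \<epsilon> / 2"
  proof -
    have p: "2 * (R0 + 1) * (Q + 1) > 0" using R0 Q by simp
    have "\<eta> * (2 * (R0 + 1) * (Q + 1)) \<le> \<epsilon>" using \<eta>(4) p by (simp add: pos_le_divide_eq)
    moreover have "Q * R0 \<le> (R0 + 1) * (Q + 1)" using R0 Q by (simp add: algebra_simps)
    hence "\<eta> * (Q * R0) \<le> \<eta> * ((R0 + 1) * (Q + 1))" using \<eta>(1) by (intro mult_left_mono) auto
    ultimately show ?thesis by (simp add: algebra_simps)
  qed
  define G where "G = B * (Mc + 1)"
  have G: "G \<ge> 0" unfolding G_def using B0 Mc by simp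
  define \<delta> where "\<delta> = \<epsilon> / (2 * (G + 1))"
  have \<delta>: "\<delta> > 0" "G * \<delta> \<le> \<epsilon> / 2"
  proof -
    show "\<delta> > 0" unfolding \<delta>_def using e G by simp
    have "G * \<delta> = \<epsilon> / 2 * (G / (G + 1))" unfolding \<delta>_def using G by (simp add: field_simps)
    also have "\<dots> \<le> \<epsilon> / 2 * 1" using G e by (intro mult_left_mono) auto
    finally show "G * \<delta> \<le> \<epsilon> / 2" by simp
  qed
  have ev1: "eventually (\<lambda>m. \<forall>t\<in>{0..1}. dist (cm m t) (c t) < \<eta>) sequentially"
    by (rule uniform_limitD[OF uc \<eta>(1)])
  have ev2: "eventually (\<lambda>m. \<forall>t\<in>{0..1}. dist (Dm m t) (D t) < \<eta>) sequentially"
    using uniform_limitD[OF ud \<eta>(1)] unfolding Dm_def D_def .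
  have ev3: "eventually (\<lambda>m. (LINT t:{0..1}|lborel. \<bar>\<rho>m m t - \<rho> t\<bar>) < \<delta>) sequentially"
    by (rule order_tendstoD(2)[OF l1 \<delta>(1)])
  show ?thesis
  proof (rule eventually_mono[OF eventually_conj[OF ev1 eventually_conj[OF ev2 ev3]]], intro ballI)
    fix m w
    assume h: "(\<forall>t\<in>{0..1}. dist (cm m t) (c t) < \<eta>) \<and> (\<forall>t\<in>{0..1}. dist (Dm m t) (D t) < \<eta>) \<and>
         (LINT t:{0..1}|lborel. \<bar>\<rho>m m t - \<rho> t\<bar>) < \<delta>" and wW: "w \<in> W"
    have wc: "C01 w" "C01_norm w \<le> B" using W wW by auto
    define Fm where "Fm t = w (cm m t, (1 / norm (Dm m t)) *\<^sub>R Dm m t) * norm (Dm m t)" for t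
    define F where "F t = w (c t, (1 / norm (D t)) *\<^sub>R D t) * norm (D t)" for t
    have pt: "\<bar>\<rho>m m t * Fm t - \<rho> t * F t\<bar> \<le> \<bar>\<rho>m m t - \<rho> t\<bar> * G + \<rho> t * (\<eta> * Q)"
      if t: "t \<in> {0..1}" for t
    proof -
      define pm where "pm = (cm m t, (1 / norm (Dm m t)) *\<^sub>R Dm m t)"
      define p where "p = (c t, (1 / norm (D t)) *\<^sub>R D t)"
      have pmX: "pm \<in> Xsp" using Dmnz[OF t] unfolding pm_def Xsp_def by auto
      have pX: "p \<in> Xsp" using Dnz[OF t] unfolding p_def Xsp_def by auto
      have dD: "norm (Dm m t - D t) < \<eta>" using h t by (simp add: dist_norm)
      have dc: "norm (cm m t - c t) < \<eta>" using h t by (simp add: dist_norm)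
      have nDm: "norm (Dm m t) \<le> Mc + 1"
        using norm_triangle_ineq2[of "Dm m t" "D t"] dD Mc(2)[OF t] \<eta>(2) by linarith
      have dn: "\<bar>norm (Dm m t) - norm (D t)\<bar> \<le> \<eta>"
        using norm_triangle_ineq3[of "Dm m t" "D t"] dD by linarith
      have "norm ((1 / norm (Dm m t)) *\<^sub>R Dm m t - (1 / norm (D t)) *\<^sub>R D t) \<le> 2 * norm (Dm m t - D t) / norm (D t)"
        by (rule unit_diff[OF Dmnz[OF t] Dnz[OF t]])
      also have "\<dots> \<le> 2 * \<eta> / a"
        by (rule frac_le) (use dD a(1) a(2)[OF t] \<eta>(1) in auto)
      finally have dT: "norm ((1 / norm (Dm m t)) *\<^sub>R Dm m t - (1 / norm (D t)) *\<^sub>R D t) \<le> 2 * \<eta> / a" .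
      have dT1: "2 * \<eta> / a \<le> 1" using \<eta>(3) a(1) by (simp add: divide_le_eq)
      have lip: "\<bar>w pm - w p\<bar> \<le> L * (\<eta> + 2 * \<eta> / a)"
      proof -
        have "\<bar>w pm - w p\<bar> \<le> 3 * B * (norm (cm m t - c t) + norm ((1 / norm (Dm m t)) *\<^sub>R Dm m t - (1 / norm (D t)) *\<^sub>R D t))"
          unfolding pm_def p_def by (rule C01_lip[OF wc]) (use pmX pX dT dT1 in \<open>auto simp: pm_def p_def\<close>)
        also have "\<dots> \<le> 3 * B * (\<eta> + 2 * \<eta> / a)"
          using dc dT B0 by (intro mult_left_mono) auto
        finally show ?thesis unfolding L_def .
      qed
      have wp: "\<bar>w p\<bar> \<le> B" "\<bar>w pm\<bar> \<le> B" using C01_bounds(1)[OF wc pX] C01_bounds(1)[OF wc pmX] by auto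
      have Fm_eq: "Fm t = w pm * norm (Dm m t)" unfolding Fm_def pm_def ..
      have F_eq: "F t = w p * norm (D t)" unfolding F_def p_def ..
      have FmG: "\<bar>Fm t\<bar> \<le> G" unfolding Fm_eq G_def abs_mult
        using wp nDm B0 by (intro mult_mono) auto
      have "Fm t - F t = (w pm - w p) * norm (Dm m t) + w p * (norm (Dm m t) - norm (D t))"
        unfolding Fm_eq F_eq by (simp add: algebra_simps)
      hence "\<bar>Fm t - F t\<bar> \<le> \<bar>(w pm - w p) * norm (Dm m t)\<bar> + \<bar>w p * (norm (Dm m t) - norm (D t))\<bar>"
        by (simp only: abs_triangle_ineq)
      also have "\<dots> = \<bar>w pm - w p\<bar> * norm (Dm m t) + \<bar>w p\<bar> * \<bar>norm (Dm m t) - norm (D t)\<bar>"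
        by (simp add: abs_mult)
      also have "\<dots> \<le> L * (\<eta> + 2 * \<eta> / a) * (Mc + 1) + B * \<eta>"
      proof (rule add_mono)
        have "0 \<le> L * (\<eta> + 2 * \<eta> / a)" unfolding L_def using B0 \<eta>(1) a(1) by simp
        thus "\<bar>w pm - w p\<bar> * norm (Dm m t) \<le> L * (\<eta> + 2 * \<eta> / a) * (Mc + 1)"
          by (rule mult_mono[OF lip nDm _ norm_ge_zero])
        show "\<bar>w p\<bar> * \<bar>norm (Dm m t) - norm (D t)\<bar> \<le> B * \<eta>"
          by (rule mult_mono[OF wp(1) dn B0 abs_ge_zero])
      qed
      also have "\<dots> = \<eta> * Q" unfolding Q_def by (simp add: algebra_simps)
      finally have dF: "\<bar>Fm t - F t\<bar> \<le> \<eta> * Q" .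
      have r0: "\<rho> t \<ge> 0" using bv t unfolding BV_nonneg_def by auto
      have "\<rho>m m t * Fm t - \<rho> t * F t = (\<rho>m m t - \<rho> t) * Fm t + \<rho> t * (Fm t - F t)"
        by (simp add: algebra_simps)
      hence "\<bar>\<rho>m m t * Fm t - \<rho> t * F t\<bar> \<le> \<bar>(\<rho>m m t - \<rho> t) * Fm t\<bar> + \<bar>\<rho> t * (Fm t - F t)\<bar>"
        by (simp only: abs_triangle_ineq)
      also have "\<dots> = \<bar>\<rho>m m t - \<rho> t\<bar> * \<bar>Fm t\<bar> + \<rho> t * \<bar>Fm t - F t\<bar>"
        using r0 by (simp add: abs_mult)
      also have "\<dots> \<le> \<bar>\<rho>m m t - \<rho> t\<bar> * G + \<rho> t * (\<eta> * Q)"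
        by (rule add_mono[OF mult_left_mono[OF FmG abs_ge_zero] mult_left_mono[OF dF r0]])
      finally show ?thesis .
    qed
    have wcont: "continuous_on Xsp w" by (rule C01_cont_Xsp[OF wc(1)])
    have iFm: "set_integrable lborel {0..1} (\<lambda>t. \<rho>m m t * Fm t)"
      using BV_cont_integrable[OF bvm[rule_format] F_cont[OF cm1[rule_format] wcont]]
      unfolding Fm_def Dm_def .
    have iF: "set_integrable lborel {0..1} (\<lambda>t. \<rho> t * F t)"
      using BV_cont_integrable[OF bv F_cont[OF c1 wcont]] unfolding F_def D_def .
    have i1: "set_integrable lborel {0..1} (\<lambda>t. \<rho> t)"
      using BV_cont_integrable[OF bv, of "\<lambda>_. 1"] by simp
    have i1m: "set_integrable lborel {0..1} (\<lambda>t. \<rho>m m t)"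
      using BV_cont_integrable[OF bvm[rule_format], of "\<lambda>_. 1" m] by simp
    have iabs: "set_integrable lborel {0..1} (\<lambda>t. \<bar>\<rho>m m t - \<rho> t\<bar>)"
      by (rule set_integrable_abs[OF set_integral_diff(1)[OF i1m i1]])
    have iG: "set_integrable lborel {0..1} (\<lambda>t. \<bar>\<rho>m m t - \<rho> t\<bar> * G + \<rho> t * (\<eta> * Q))"
      using iabs i1 by (intro set_integral_add(1)) auto
    have eqm: "(LINT t:{0..1}|lborel. \<rho>m m t * w (cm m t, (1 / norm (dtheta (cm m) t)) *\<^sub>R dtheta (cm m) t) * norm (dtheta (cm m) t))
       = (LINT t:{0..1}|lborel. \<rho>m m t * Fm t)" unfolding Fm_def Dm_def by (simp add: mult.assoc)
    have eq: "(LINT t:{0..1}|lborel. \<rho> t * w (c t, (1 / norm (dtheta c t)) *\<^sub>R dtheta c t) * norm (dtheta c t))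
       = (LINT t:{0..1}|lborel. \<rho> t * F t)" unfolding F_def D_def by (simp add: mult.assoc)
    have "\<bar>(LINT t:{0..1}|lborel. \<rho>m m t * Fm t) - (LINT t:{0..1}|lborel. \<rho> t * F t)\<bar>
        = \<bar>LINT t:{0..1}|lborel. \<rho>m m t * Fm t - \<rho> t * F t\<bar>"
      using set_integral_diff(2)[OF iFm iF] by simp
    also have "\<dots> \<le> (LINT t:{0..1}|lborel. \<bar>\<rho>m m t * Fm t - \<rho> t * F t\<bar>)"
      using set_integral_norm_bound[OF set_integral_diff(1)[OF iFm iF]] by simp
    also have "\<dots> \<le> (LINT t:{0..1}|lborel. \<bar>\<rho>m m t - \<rho> t\<bar> * G + \<rho> t * (\<eta> * Q))"
      by (rule set_integral_mono[OF set_integrable_abs[OF set_integral_diff(1)[OF iFm iF]] iG pt])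
    also have "\<dots> = (LINT t:{0..1}|lborel. \<bar>\<rho>m m t - \<rho> t\<bar>) * G + (LINT t:{0..1}|lborel. \<rho> t) * (\<eta> * Q)"
      using iabs i1 by (subst set_integral_add(2)) auto
    also have "\<dots> \<le> \<delta> * G + R0 * (\<eta> * Q)"
      using h G \<eta>(1) Q unfolding R0_def by (intro add_mono mult_right_mono) auto
    also have "\<dots> \<le> \<epsilon>" using \<delta>(2) \<eta>Q by (simp add: algebra_simps)
    finally show "\<bar>(LINT t:{0..1}|lborel. \<rho>m m t * w (cm m t, (1 / norm (dtheta (cm m) t)) *\<^sub>R dtheta (cm m) t) * norm (dtheta (cm m) t))
     - (LINT t:{0..1}|lborel. \<rho> t * w (c t, (1 / norm (dtheta c t)) *\<^sub>R dtheta c t) * norm (dtheta c t))\<bar> \<le> \<epsilon>"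
      unfolding eqm eq .
  qed
qed


theorem lemma4p4:
  fixes n K :: nat
    and A :: "nat \<Rightarrow> nat \<Rightarrow> nat"
    and Kr :: "'a::euclidean_space \<times> 'a \<Rightarrow> 'a \<times> 'a \<Rightarrow> real"
    and Hs :: "('a \<times> 'a \<Rightarrow> real) set"
    and ip :: "('a \<times> 'a \<Rightarrow> real) \<Rightarrow> ('a \<times> 'a \<Rightarrow> real) \<Rightarrow> real"
    and cm :: "nat \<Rightarrow> nat \<Rightarrow> real \<Rightarrow> 'a"
    and \<rho>m :: "nat \<Rightarrow> nat \<Rightarrow> real \<Rightarrow> real"
    and c :: "nat \<Rightarrow> real \<Rightarrow> 'a"
    and \<rho> :: "nat \<Rightarrow> real \<Rightarrow> real"
  assumes "n \<ge> 2" and "K \<ge> 1"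
    and "\<forall>i\<in>{1..2*K}. \<forall>j\<in>{1..2*K}. A i j \<in> {0, 1}"
    and "pos_def_kernel Kr" and "is_rkhs Kr Hs ip"
    and "cont_embedded_C01 Hs ip"
    and "\<forall>m. graph_n n K A (cm m)"
    and "\<forall>m. \<forall>k\<in>{1..K}. BV_nonneg (\<rho>m m k)"
    and "\<forall>m. \<forall>k\<in>{1..K}. C1_immersion (cm m k)"
    and "\<forall>k\<in>{1..K}. C1_immersion (c k)"
    and "\<forall>k\<in>{1..K}. uniform_limit {0..1} (\<lambda>m. cm m k) (c k) sequentially"
    and "\<forall>k\<in>{1..K}. uniform_limit {0..1} (\<lambda>m. dtheta (cm m k)) (dtheta (c k)) sequentially"
    and "\<forall>k\<in>{1..K}. BV_nonneg (\<rho> k)"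
    and "\<forall>k\<in>{1..K}. (\<lambda>m. LINT t:{0..1}|lborel. \<bar>\<rho>m m k t - \<rho> k t\<bar>) \<longlonglongrightarrow> 0"
  shows "(\<lambda>m. V_dist Hs ip (mu_int K (cm m) (\<rho>m m)) (mu_int K c \<rho>)) \<longlonglongrightarrow> 0"
proof -
  obtain C where C: "\<And>w. w \<in> Hs \<Longrightarrow> C01 w \<and> C01_norm w \<le> C * hnorm ip w"
    using assms(6) unfolding cont_embedded_C01_def by blast
  define B where "B = max C 0"
  have B0: "0 \<le> B" unfolding B_def by simp
  define W where "W = {w. w \<in> Hs \<and> hnorm ip w \<le> 1}"
  have ipnn: "\<And>w. w \<in> Hs \<Longrightarrow> ip w w \<ge> 0" using assms(5) unfolding is_rkhs_def by blast
  have Wp: "\<forall>w\<in>W. C01 w \<and> C01_norm w \<le> B"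
  proof
    fix w assume "w \<in> W"
    hence w: "w \<in> Hs" "hnorm ip w \<le> 1" unfolding W_def by auto
    have h0: "hnorm ip w \<ge> 0" unfolding hnorm_def using ipnn[OF w(1)] by simp
    have "C * hnorm ip w \<le> B"
    proof (cases "C \<ge> 0")
      case True
      hence "C * hnorm ip w \<le> C * 1" using w(2) by (intro mult_left_mono) auto
      thus ?thesis unfolding B_def by simp
    next
      case False
      hence "C * hnorm ip w \<le> 0" using h0 by (simp add: mult_nonpos_nonneg)
      thus ?thesis unfolding B_def by simp
    qed
    thus "C01 w \<and> C01_norm w \<le> B" using C[OF w(1)] by auto
  qed
  have zH: "(\<lambda>_. 0) \<in> Hs" using assms(5) unfolding is_rkhs_def by blast
  have lin: "\<forall>f\<in>Hs. \<forall>g\<in>Hs. \<forall>h\<in>Hs. \<forall>r s. ip (\<lambda>q. r * f q + s * g q) h = r * ip f h + s * ip g h"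
    using assms(5) unfolding is_rkhs_def by blast
  have ip0: "ip (\<lambda>_. 0) (\<lambda>_. 0) = 0" using lin[rule_format, OF zH zH zH, of 0 0] by simp
  have zW: "(\<lambda>_. 0) \<in> W" unfolding W_def hnorm_def using zH ip0 by simp
  show ?thesis
  proof (rule tendstoI)
    fix \<epsilon> :: real assume e: "\<epsilon> > 0"
    define e' where "e' = \<epsilon> / (2 * real K)"
    have Kpos: "real K > 0" using assms(2) by simp
    have e': "e' > 0" unfolding e'_def using e Kpos by simp
    have evk: "\<forall>k\<in>{1..K}. eventually (\<lambda>m. \<forall>w\<in>W. \<bar>(LINT t:{0..1}|lborel. \<rho>m m k t * w (cm m k t, (1 / norm (dtheta (cm m k) t)) *\<^sub>R dtheta (cm m k) t) * norm (dtheta (cm m k) t))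
     - (LINT t:{0..1}|lborel. \<rho> k t * w (c k t, (1 / norm (dtheta (c k) t)) *\<^sub>R dtheta (c k) t) * norm (dtheta (c k) t))\<bar> \<le> e') sequentially"
    proof
      fix k assume k: "k \<in> {1..K}"
      show "eventually (\<lambda>m. \<forall>w\<in>W. \<bar>(LINT t:{0..1}|lborel. \<rho>m m k t * w (cm m k t, (1 / norm (dtheta (cm m k) t)) *\<^sub>R dtheta (cm m k) t) * norm (dtheta (cm m k) t))
     - (LINT t:{0..1}|lborel. \<rho> k t * w (c k t, (1 / norm (dtheta (c k) t)) *\<^sub>R dtheta (c k) t) * norm (dtheta (c k) t))\<bar> \<le> e') sequentially"
        by (rule conv_k[where cm="\<lambda>m. cm m k" and \<rho>m="\<lambda>m. \<rho>m m k", OF _ _ _ _ _ _ _ Wp B0 e'])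
           (use k assms(8-14) in auto)
    qed
    have ev: "eventually (\<lambda>m. \<forall>k\<in>{1..K}. \<forall>w\<in>W. \<bar>(LINT t:{0..1}|lborel. \<rho>m m k t * w (cm m k t, (1 / norm (dtheta (cm m k) t)) *\<^sub>R dtheta (cm m k) t) * norm (dtheta (cm m k) t))
     - (LINT t:{0..1}|lborel. \<rho> k t * w (c k t, (1 / norm (dtheta (c k) t)) *\<^sub>R dtheta (c k) t) * norm (dtheta (c k) t))\<bar> \<le> e') sequentially"
      by (rule eventually_ball_finite[OF finite_atLeastAtMost evk])
    show "eventually (\<lambda>m. dist (V_dist Hs ip (mu_int K (cm m) (\<rho>m m)) (mu_int K c \<rho>)) 0 < \<epsilon>) sequentially"
    proof (rule eventually_mono[OF ev])
      fix m
      assume h: "\<forall>k\<in>{1..K}. \<forall>w\<in>W. \<bar>(LINT t:{0..1}|lborel. \<rho>m m k t * w (cm m k t, (1 / norm (dtheta (cm m k) t)) *\<^sub>R dtheta (cm m k) t) * norm (dtheta (cm m k) t))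
     - (LINT t:{0..1}|lborel. \<rho> k t * w (c k t, (1 / norm (dtheta (c k) t)) *\<^sub>R dtheta (c k) t) * norm (dtheta (c k) t))\<bar> \<le> e'"
      define S where "S = {mu_int K (cm m) (\<rho>m m) w - mu_int K c \<rho> w | w. w \<in> Hs \<and> hnorm ip w \<le> 1}"
      have bnd: "x \<le> \<epsilon> / 2" if xS: "x \<in> S" for x
      proof -
        obtain w where w: "w \<in> W" and x: "x = mu_int K (cm m) (\<rho>m m) w - mu_int K c \<rho> w"
          using xS unfolding S_def W_def by blast
        have "x = (\<Sum>k\<in>{1..K}. (LINT t:{0..1}|lborel. \<rho>m m k t * w (cm m k t, (1 / norm (dtheta (cm m k) t)) *\<^sub>R dtheta (cm m k) t) * norm (dtheta (cm m k) t))
           - (LINT t:{0..1}|lborel. \<rho> k t * w (c k t, (1 / norm (dtheta (c k) t)) *\<^sub>R dtheta (c k) t) * norm (dtheta (c k) t)))"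
          unfolding x mu_int_def by (simp add: sum_subtractf)
        also have "\<dots> \<le> (\<Sum>k\<in>{1..K}. e')"
          by (rule sum_mono) (use h w in \<open>auto simp: abs_le_iff\<close>)
        also have "\<dots> = \<epsilon> / 2" unfolding e'_def using Kpos by simp
        finally show ?thesis .
      qed
      have zS: "0 \<in> S" unfolding S_def using zW unfolding W_def
        by (auto intro!: exI[of _ "\<lambda>_. 0"] simp: mu_int_def)
      have bS: "bdd_above S" using bnd by (intro bdd_aboveI) 
      have up: "Sup S \<le> \<epsilon> / 2" by (rule cSup_least) (use zS bnd in auto)
      have lo: "0 \<le> Sup S" by (rule cSup_upper[OF zS bS])
      have "V_dist Hs ip (mu_int K (cm m) (\<rho>m m)) (mu_int K c \<rho>) = Sup S"
        unfolding V_dist_def S_def ..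
      thus "dist (V_dist Hs ip (mu_int K (cm m) (\<rho>m m)) (mu_int K c \<rho>)) 0 < \<epsilon>"
        using up lo e by (simp add: dist_real_def)
    qed
  qed
qed

end
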